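(* Assume the setting described in the context and suppose the event $\mathcal{E}$ holds. There is an absolute constant $C>0$ such that the following holds. Let $k'\ge k$ be an integer, let $\mathbf{w}\in\mathbb{R}^n$ be a unit vector with at most $k'$ nonzero entries, set $\alpha:=|\langle\mathbf{w},\mathbf{v}\rangle|$ and $\mathbf{y}:=\hat{\boldsymbol{\Gamma}}\mathbf{w}$ (so $\mathbf{y}=\theta\langle\mathbf{w},\mathbf{v}\rangle\mathbf{v}+\mathbf{W}\mathbf{w}$), and define $$ b:=C(1+\theta)\sqrt{\frac{k'\log n}{m}}. $$ Whenever $\theta\alpha>2b$, $$ \cos\angle\Big(\frac{\mathcal{H}_{k'}(\mathbf{y})}{\|\mathcal{H}_{k'}(\mathbf{y})\|_2},\mathbf{v}\Big)\ \ge\ \frac{\theta\alpha-2b}{\theta\alpha+b}\qquad\text{and}\qquad \sin\angle\Big(\frac{\mathcal{H}_{k'}(\mathbf{y})}{\|\mathcal{H}_{k'}(\mathbf{y})\|_2},\mathbf{v}\Big)\ \le\ \frac{5b}{\theta\alpha-2b}. $$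
   Context: Let $n\ge 2$, $m\ge1$, $\theta>0$, $k\in[n]$; $\mathbf{v}\in\mathbb{R}^n$ a unit vector with at most $k$ nonzero entries; $\mathbf{x}_1,\dots,\mathbf{x}_m$ i.i.d. $\mathcal{N}(\mathbf{0},\mathbf{I}_n+\theta\mathbf{v}\mathbf{v}^\top)$; $\hat{\boldsymbol{\Gamma}}=\frac1m\sum_i\mathbf{x}_i\mathbf{x}_i^\top-\mathbf{I}_n$; $\mathbf{W}=\hat{\boldsymbol{\Gamma}}-\theta\mathbf{v}\mathbf{v}^\top$. $\|\cdot\|_2$ is the Euclidean/spectral norm and $\mathbf{W}_{S,S}$ a principal submatrix. $\mathcal{H}_{k'}$ keeps the $k'$ largest-magnitude entries of a vector and zeroes the rest. For unit vectors, $\cos\angle(\mathbf{a},\mathbf{b})=|\langle\mathbf{a},\mathbf{b}\rangle|$ and $\sin\angle(\mathbf{a},\mathbf{b})=\sqrt{1-\langle\mathbf{a},\mathbf{b}\rangle^2}$. Fix an absolute constant $C_0>0$; $\mathcal{E}$ is the event that $\|\mathbf{W}_{S,S}\|_2\le C_0(1+\theta)\sqrt{|S|\log n/m}$ for all nonempty $S\subseteq[n]$. Absolute constants do not depend on $n,m,k,k',\theta,\mathbf{v},\mathbf{w}$. *)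

theory Defs
  imports "HOL-Analysis.Analysis"
begin

text \<open>Vectors in R^n are functions nat => real, only indices < n matter;
  n x n matrices are functions nat => nat => real.\<close>

definition vinner :: "nat \<Rightarrow> (nat \<Rightarrow> real) \<Rightarrow> (nat \<Rightarrow> real) \<Rightarrow> real" where
  "vinner n x y = (\<Sum>i<n. x i * y i)"

definition vnorm :: "nat \<Rightarrow> (nat \<Rightarrow> real) \<Rightarrow> real" where
  "vnorm n x = sqrt (\<Sum>i<n. (x i)\<^sup>2)"

definition nnz :: "nat \<Rightarrow> (nat \<Rightarrow> real) \<Rightarrow> nat" where
  "nnz n x = card {i. i < n \<and> x i \<noteq> 0}"

definition matvec :: "nat \<Rightarrow> (nat \<Rightarrow> nat \<Rightarrow> real) \<Rightarrow> (nat \<Rightarrow> real) \<Rightarrow> nat \<Rightarrow> real" where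
  "matvec n A x = (\<lambda>i. \<Sum>j<n. A i j * x j)"

text \<open>Sample x_l has coordinates X l i (l < m, i < n).
  Gamma_hat = (1/m) sum_l x_l x_l^T - I.\<close>
definition Gamma_hat :: "nat \<Rightarrow> nat \<Rightarrow> (nat \<Rightarrow> nat \<Rightarrow> real) \<Rightarrow> nat \<Rightarrow> nat \<Rightarrow> real" where
  "Gamma_hat n m X = (\<lambda>i j. (1 / real m) * (\<Sum>l<m. X l i * X l j) - (if i = j then 1 else 0))"

definition noise_W :: "nat \<Rightarrow> nat \<Rightarrow> (nat \<Rightarrow> nat \<Rightarrow> real) \<Rightarrow> real \<Rightarrow> (nat \<Rightarrow> real) \<Rightarrow> nat \<Rightarrow> nat \<Rightarrow> real" where
  "noise_W n m X \<theta> v = (\<lambda>i j. Gamma_hat n m X i j - \<theta> * v i * v j)"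

definition sub_opnorm :: "(nat \<Rightarrow> nat \<Rightarrow> real) \<Rightarrow> nat set \<Rightarrow> real" where
  "sub_opnorm A S = Sup {sqrt (\<Sum>i\<in>S. (\<Sum>j\<in>S. A i j * x j)\<^sup>2) | x. (\<Sum>j\<in>S. (x j)\<^sup>2) \<le> 1}"

definition event_E :: "real \<Rightarrow> nat \<Rightarrow> nat \<Rightarrow> real \<Rightarrow> (nat \<Rightarrow> real) \<Rightarrow> (nat \<Rightarrow> nat \<Rightarrow> real) \<Rightarrow> bool" where
  "event_E C0 n m \<theta> v X \<longleftrightarrow>
     (\<forall>S. S \<subseteq> {..<n} \<and> S \<noteq> {} \<longrightarrow>
        sub_opnorm (noise_W n m X \<theta> v) S \<le> C0 * (1 + \<theta>) * sqrt (real (card S) * ln (real n) / real m))"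

text \<open>z is a hard thresholding H_k(y): keeps min(k,n) largest-magnitude entries
  (any tie-breaking), zeroes the rest.\<close>
definition is_hard_threshold :: "nat \<Rightarrow> nat \<Rightarrow> (nat \<Rightarrow> real) \<Rightarrow> (nat \<Rightarrow> real) \<Rightarrow> bool" where
  "is_hard_threshold n k y z \<longleftrightarrow>
     (\<exists>S. S \<subseteq> {..<n} \<and> card S = min k n \<and>
        (\<forall>i\<in>S. \<forall>j\<in>{..<n} - S. \<bar>y j\<bar> \<le> \<bar>y i\<bar>) \<and>
        (\<forall>i<n. z i = (if i \<in> S then y i else 0)))"

end

theory Submission
  imports Defs
begin


lemma opnorm_upper:
  assumes "finite S" "(\<Sum>j\<in>S. (x j)\<^sup>2) \<le> 1"
  shows "sqrt (\<Sum>i\<in>S. (\<Sum>j\<in>S. A i j * x j)\<^sup>2) \<le> sub_opnorm A S"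
proof -
  have bd: "sqrt (\<Sum>i\<in>S. (\<Sum>j\<in>S. A i j * x' j)\<^sup>2) \<le> (\<Sum>i\<in>S. \<Sum>j\<in>S. \<bar>A i j\<bar>)"
    if "(\<Sum>j\<in>S. (x' j)\<^sup>2) \<le> 1" for x'
  proof -
    have xj: "\<bar>x' j\<bar> \<le> 1" if "j \<in> S" for j
    proof -
      have "(x' j)\<^sup>2 \<le> (\<Sum>j\<in>S. (x' j)\<^sup>2)"
        using assms(1) that by (intro member_le_sum) auto
      then have "(x' j)\<^sup>2 \<le> 1" using \<open>(\<Sum>j\<in>S. (x' j)\<^sup>2) \<le> 1\<close> by linarith
      then show ?thesis by (simp add: abs_square_le_1)
    qed
    have "sqrt (\<Sum>i\<in>S. (\<Sum>j\<in>S. A i j * x' j)\<^sup>2) = L2_set (\<lambda>i. \<Sum>j\<in>S. A i j * x' j) S"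
      by (simp add: L2_set_def)
    also have "\<dots> \<le> (\<Sum>i\<in>S. \<bar>\<Sum>j\<in>S. A i j * x' j\<bar>)" by (rule L2_set_le_sum_abs)
    also have "\<dots> \<le> (\<Sum>i\<in>S. \<Sum>j\<in>S. \<bar>A i j\<bar>)"
    proof (rule sum_mono)
      fix i assume "i \<in> S"
      have "\<bar>\<Sum>j\<in>S. A i j * x' j\<bar> \<le> (\<Sum>j\<in>S. \<bar>A i j * x' j\<bar>)" by (rule sum_abs)
      also have "\<dots> \<le> (\<Sum>j\<in>S. \<bar>A i j\<bar>)"
      proof (rule sum_mono)
        fix j assume "j \<in> S"
        show "\<bar>A i j * x' j\<bar> \<le> \<bar>A i j\<bar>"
          using xj[OF \<open>j \<in> S\<close>] by (simp add: abs_mult mult_left_le)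
      qed
      finally show "\<bar>\<Sum>j\<in>S. A i j * x' j\<bar> \<le> (\<Sum>j\<in>S. \<bar>A i j\<bar>)" .
    qed
    finally show ?thesis .
  qed
  show ?thesis unfolding sub_opnorm_def
    apply (rule cSup_upper)
    using assms(2) apply blast
    unfolding bdd_above_def using bd by blast
qed

lemma swap_sq:
  fixes f :: "nat \<Rightarrow> real"
  assumes "finite P" "finite Q" "card P \<le> card Q"
    "\<And>i j. i \<in> Q \<Longrightarrow> j \<in> P \<Longrightarrow> \<bar>f j\<bar> \<le> \<bar>f i\<bar>"
  shows "(\<Sum>j\<in>P. (f j)\<^sup>2) \<le> (\<Sum>i\<in>Q. (f i)\<^sup>2)"
proof (cases "P = {}")
  case True then show ?thesis by (simp add: sum_nonneg)
next
  case False
  then have "Q \<noteq> {}" using assms by (metis card_0_eq le_zero_eq)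
  define \<mu> where "\<mu> = Min ((\<lambda>i. \<bar>f i\<bar>) ` Q)"
  have mu_le: "\<mu> \<le> \<bar>f i\<bar>" if "i \<in> Q" for i
    unfolding \<mu>_def using assms(2) that by simp
  have "\<mu> \<in> (\<lambda>i. \<bar>f i\<bar>) ` Q" unfolding \<mu>_def using assms(2) \<open>Q \<noteq> {}\<close> by (intro Min_in) auto
  then obtain i0 where "i0 \<in> Q" "\<mu> = \<bar>f i0\<bar>" by auto
  have "0 \<le> \<mu>" using \<open>\<mu> = \<bar>f i0\<bar>\<close> by simp
  have "(\<Sum>j\<in>P. (f j)\<^sup>2) \<le> (\<Sum>j\<in>P. \<mu>\<^sup>2)"
  proof (rule sum_mono)
    fix j assume "j \<in> P"
    have "\<bar>f j\<bar> \<le> \<mu>" using assms(4)[OF \<open>i0 \<in> Q\<close> \<open>j \<in> P\<close>] \<open>\<mu> = \<bar>f i0\<bar>\<close> by simp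
    then show "(f j)\<^sup>2 \<le> \<mu>\<^sup>2" by (metis abs_ge_zero power2_abs power_mono)
  qed
  also have "\<dots> = real (card P) * \<mu>\<^sup>2" by simp
  also have "\<dots> \<le> real (card Q) * \<mu>\<^sup>2" using assms(3) by (simp add: mult_right_mono)
  also have "\<dots> = (\<Sum>i\<in>Q. \<mu>\<^sup>2)" by simp
  also have "\<dots> \<le> (\<Sum>i\<in>Q. (f i)\<^sup>2)"
  proof (rule sum_mono)
    fix i assume "i \<in> Q"
    show "\<mu>\<^sup>2 \<le> (f i)\<^sup>2" using mu_le[OF \<open>i \<in> Q\<close>] \<open>0 \<le> \<mu>\<close>
      by (metis power2_abs power_mono)
  qed
  finally show ?thesis .
qed

lemma L2_set_subset_le:
  assumes "finite B" "A \<subseteq> B"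
  shows "L2_set f A \<le> L2_set f B"
  unfolding L2_set_def using assms by (intro real_sqrt_le_mono sum_mono2) auto

lemma L2_set_scale: "L2_set (\<lambda>i. a * f i) B = \<bar>a\<bar> * L2_set f B"
  unfolding L2_set_def by (simp add: power_mult_distrib sum_distrib_left[symmetric] real_sqrt_mult)

lemma L2_set_uminus: "L2_set (\<lambda>i. - f i) B = L2_set f B"
  unfolding L2_set_def by simp

lemma main_step:
  fixes C0 :: real and n m k k' :: nat and \<theta> :: real and v X w z
  assumes C0: "C0 > 0"
  and hn: "n \<ge> 2" and hm: "m \<ge> 1" and ht: "\<theta> > 0" and hk: "1 \<le> k" "k \<le> n" "k \<le> k'"
  and hv: "vnorm n v = 1" "nnz n v \<le> k"
  and hE: "event_E C0 n m \<theta> v X"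
  and hw: "vnorm n w = 1" "nnz n w \<le> k'"
  and hH: "is_hard_threshold n k' (matvec n (Gamma_hat n m X) w) z"
  and hA: "\<theta> * \<bar>vinner n w v\<bar> > 2 * ((3 * C0) * (1 + \<theta>) * sqrt (real k' * ln (real n) / real m))"
  shows "(let \<alpha> = \<bar>vinner n w v\<bar>;
         b = (3 * C0) * (1 + \<theta>) * sqrt (real k' * ln (real n) / real m);
         u = (\<lambda>i. z i / vnorm n z)
     in \<bar>vinner n u v\<bar> \<ge> (\<theta> * \<alpha> - 2 * b) / (\<theta> * \<alpha> + b) \<and>
        sqrt (1 - (vinner n u v)\<^sup>2) \<le> 5 * b / (\<theta> * \<alpha> - 2 * b))"
proof -
  define N where "N = {..<n}"
  define W where "W = noise_W n m X \<theta> v"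
  define e where "e = (\<lambda>i. \<Sum>j<n. W i j * w j)"
  define a where "a = \<theta> * vinner n w v"
  define y where "y = matvec n (Gamma_hat n m X) w"
  define b where "b = (3 * C0) * (1 + \<theta>) * sqrt (real k' * ln (real n) / real m)"
  define \<epsilon> where "\<epsilon> = C0 * (1 + \<theta>) * sqrt (3 * real k' * ln (real n) / real m)"
  define A where "A = \<theta> * \<bar>vinner n w v\<bar>"
  have finN: "finite N" by (simp add: N_def)
  have AA: "A = \<bar>a\<bar>" using ht by (simp add: A_def a_def abs_mult)
  have y_eq: "y i = a * v i + e i" for i
  proof -
    have g: "Gamma_hat n m X i j = W i j + \<theta> * v i * v j" for j
      by (simp add: W_def noise_W_def)
    have "y i = (\<Sum>j<n. (W i j + \<theta> * v i * v j) * w j)"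
      by (simp add: y_def matvec_def g)
    also have "\<dots> = e i + \<theta> * v i * (\<Sum>j<n. w j * v j)"
      by (simp add: e_def algebra_simps sum.distrib sum_distrib_left)
    finally show ?thesis by (simp add: a_def vinner_def algebra_simps)
  qed
  obtain S where S: "S \<subseteq> {..<n}" "card S = min k' n"
      "\<forall>i\<in>S. \<forall>j\<in>{..<n} - S. \<bar>y j\<bar> \<le> \<bar>y i\<bar>"
      "\<forall>i<n. z i = (if i \<in> S then y i else 0)"
    using hH unfolding is_hard_threshold_def y_def by blast
  define V where "V = {i. i < n \<and> v i \<noteq> 0}"
  define T where "T = {i. i < n \<and> w i \<noteq> 0}"
  define U where "U = S \<union> V \<union> T"
  have finS: "finite S" using S(1) finite_subset by blast
  have finV: "finite V" "finite T" by (auto simp: V_def T_def)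
  have finU: "finite U" using finS finV by (simp add: U_def)
  have UN: "U \<subseteq> N" using S(1) by (auto simp: U_def V_def T_def N_def)
  have cV: "card V \<le> k" using hv(2) by (simp add: nnz_def V_def)
  have cT: "card T \<le> k'" using hw(2) by (simp add: nnz_def T_def)
  have cS: "card S \<le> k'" using S(2) by simp
  have cVS: "card V \<le> card S" using S(2) cV hk by simp
  have cU: "card U \<le> 3 * k'"
  proof -
    have "card U \<le> card (S \<union> V) + card T" unfolding U_def by (rule card_Un_le)
    also have "\<dots> \<le> card S + card V + card T" using card_Un_le[of S V] by simp
    finally show ?thesis using cV cT cS hk by simp
  qed
  have v0: "v i = 0" if "i < n" "i \<notin> V" for i using that by (simp add: V_def)
  have w0: "w i = 0" if "i < n" "i \<notin> T" for i using that by (simp add: T_def)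
  have sv: "(\<Sum>i\<in>N. (v i)\<^sup>2) = 1" using hv(1) by (simp add: vnorm_def N_def)
  have sw: "(\<Sum>i\<in>N. (w i)\<^sup>2) = 1" using hw(1) by (simp add: vnorm_def N_def)
  have L2v: "L2_set v N = 1" using sv by (simp add: L2_set_def)
  have swU: "(\<Sum>j\<in>U. (w j)\<^sup>2) = 1"
  proof -
    have "(\<Sum>j\<in>U. (w j)\<^sup>2) = (\<Sum>j\<in>N. (w j)\<^sup>2)"
      using UN finN w0 by (intro sum.mono_neutral_left) (auto simp: U_def N_def)
    then show ?thesis using sw by simp
  qed
  have "T \<noteq> {}"
  proof
    assume "T = {}"
    then have "(\<Sum>i\<in>N. (w i)\<^sup>2) = 0" using w0 by (simp add: N_def)
    then show False using sw by simp
  qed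
  then have Une: "U \<noteq> {}" by (simp add: U_def)
  have eU: "e i = (\<Sum>j\<in>U. W i j * w j)" for i
    unfolding e_def using UN finU w0
    by (intro sum.mono_neutral_right) (auto simp: U_def N_def)
  have lnn: "ln (real n) \<ge> 0" using hn by simp
  have L2eU: "L2_set e U \<le> \<epsilon>"
  proof -
    have "L2_set e U = sqrt (\<Sum>i\<in>U. (\<Sum>j\<in>U. W i j * w j)\<^sup>2)"
      by (simp add: L2_set_def eU)
    also have "\<dots> \<le> sub_opnorm W U" using finU swU by (intro opnorm_upper) auto
    also have "\<dots> \<le> C0 * (1 + \<theta>) * sqrt (real (card U) * ln (real n) / real m)"
      using hE UN Une unfolding event_E_def W_def N_def by blast
    also have "\<dots> \<le> \<epsilon>" unfolding \<epsilon>_def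
    proof -
      have "real (card U) * ln (real n) / real m \<le> 3 * real k' * ln (real n) / real m"
        using cU lnn hm by (intro divide_right_mono mult_right_mono) auto
      then have "sqrt (real (card U) * ln (real n) / real m) \<le> sqrt (3 * real k' * ln (real n) / real m)"
        by simp
      then show "C0 * (1 + \<theta>) * sqrt (real (card U) * ln (real n) / real m) \<le> C0 * (1 + \<theta>) * sqrt (3 * real k' * ln (real n) / real m)"
        using C0 ht by (intro mult_left_mono) auto
    qed
    finally show ?thesis .
  qed
  have eps0: "\<epsilon> \<ge> 0" using L2eU by (meson L2_set_nonneg order_trans)
  have eps_b: "3 * \<epsilon> \<le> 2 * b"
  proof -
    define q where "q = sqrt (real k' * ln (real n) / real m)"
    have q0: "q \<ge> 0" using lnn by (simp add: q_def)
    have "sqrt (3 * real k' * ln (real n) / real m) = sqrt 3 * q"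
      by (simp add: q_def real_sqrt_mult[symmetric])
    moreover have "sqrt 3 \<le> (2::real)"
      by (rule real_le_lsqrt[THEN order_trans[OF _ order_refl]]) auto
    ultimately have "sqrt (3 * real k' * ln (real n) / real m) \<le> 2 * q"
      using q0 by (simp add: mult_right_mono)
    then have "C0 * (1 + \<theta>) * sqrt (3 * real k' * ln (real n) / real m) \<le> C0 * (1 + \<theta>) * (2 * q)"
      using C0 ht by (intro mult_left_mono) auto
    then show ?thesis by (simp add: \<epsilon>_def b_def q_def algebra_simps)
  qed
  have b0: "b \<ge> 0" using eps_b eps0 by linarith
  have Ab: "A > 2 * b" using hA by (simp add: A_def b_def)
  have L2e_sub: "L2_set e B \<le> \<epsilon>" if "B \<subseteq> U" for B
    using L2_set_subset_le[OF finU that, of e] L2eU by linarith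
  define r where "r = L2_set v (V - S)"
  have "(\<Sum>j\<in>V - S. (y j)\<^sup>2) \<le> (\<Sum>i\<in>S - V. (y i)\<^sup>2)"
  proof (rule swap_sq)
    show "finite (V - S)" "finite (S - V)" using finV finS by auto
    have "card (V - S) = card V - card (V \<inter> S)" using finV by (intro card_Diff_subset_Int) auto
    moreover have "card (S - V) = card S - card (S \<inter> V)" using finS by (intro card_Diff_subset_Int) auto
    ultimately show "card (V - S) \<le> card (S - V)" using cVS by (simp add: Int_commute)
    fix i j assume "i \<in> S - V" "j \<in> V - S"
    then show "\<bar>y j\<bar> \<le> \<bar>y i\<bar>" using S(3) by (auto simp: V_def)
  qed
  then have "L2_set y (V - S) \<le> L2_set y (S - V)" by (simp add: L2_set_def)
  also have "L2_set y (S - V) = L2_set e (S - V)"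
    using S(1) v0 by (intro L2_set_cong) (auto simp: y_eq)
  also have "\<dots> \<le> \<epsilon>" by (rule L2e_sub) (auto simp: U_def)
  finally have yVS: "L2_set y (V - S) \<le> \<epsilon>" .
  have Ar: "A * r \<le> 2 * \<epsilon>"
  proof -
    have "A * r = L2_set (\<lambda>i. a * v i) (V - S)" by (simp add: r_def AA L2_set_scale)
    also have "\<dots> = L2_set (\<lambda>i. y i + - e i) (V - S)" by (simp add: y_eq)
    also have "\<dots> \<le> L2_set y (V - S) + L2_set (\<lambda>i. - e i) (V - S)" by (rule L2_set_triangle_ineq)
    also have "\<dots> \<le> \<epsilon> + \<epsilon>"
    proof -
      have "V - S \<subseteq> U" by (auto simp: U_def)
      then show ?thesis using yVS L2e_sub[of "V - S"] by (simp add: L2_set_uminus)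
    qed
    finally show ?thesis by simp
  qed
  have r0: "r \<ge> 0" by (simp add: r_def)
  have r2: "r\<^sup>2 = (\<Sum>i\<in>V - S. (v i)\<^sup>2)" using finV by (simp add: r_def L2_set_def sum_nonneg)
  have NS_VS: "(\<Sum>i\<in>N - S. (v i)\<^sup>2) = (\<Sum>i\<in>V - S. (v i)\<^sup>2)"
    using finN v0 by (intro sum.mono_neutral_right) (auto simp: N_def V_def)
  have split_v: "(\<Sum>i\<in>S. (v i)\<^sup>2) + (\<Sum>i\<in>N - S. (v i)\<^sup>2) = 1"
    using sv finN S(1) by (metis N_def sum.subset_diff add.commute)
  have r1: "r \<le> 1"
  proof -
    have "r\<^sup>2 \<le> 1" using r2 NS_VS split_v sum_nonneg[of S "\<lambda>i. (v i)\<^sup>2"] by simp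
    then show ?thesis using r0 by (simp add: power_le_one_iff abs_square_le_1)
  qed
  have A0: "A \<ge> 0" by (simp add: AA)
  define c where "c = vinner n z v"
  have c_eq: "c = a * (\<Sum>i\<in>S. (v i)\<^sup>2) + (\<Sum>i\<in>S. e i * v i)"
  proof -
    have "c = (\<Sum>i\<in>N. (if i \<in> S then y i * v i else 0))"
      unfolding c_def vinner_def N_def using S(4) by (intro sum.cong) auto
    also have "\<dots> = (\<Sum>i\<in>S. y i * v i)"
      using finN S(1) by (simp add: sum.If_cases N_def Int_absorb1 Int_absorb2)
    also have "\<dots> = (\<Sum>i\<in>S. a * (v i)\<^sup>2 + e i * v i)"
      by (simp add: y_eq power2_eq_square algebra_simps)
    finally show ?thesis by (simp add: sum.distrib sum_distrib_left)
  qed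
  have L2vS: "L2_set v S \<le> 1" using L2_set_subset_le[OF finN, of S v] S(1) L2v by (simp add: N_def)
  have ev: "\<bar>\<Sum>i\<in>S. e i * v i\<bar> \<le> \<epsilon>"
  proof -
    have "\<bar>\<Sum>i\<in>S. e i * v i\<bar> \<le> (\<Sum>i\<in>S. \<bar>e i * v i\<bar>)" by (rule sum_abs)
    also have "\<dots> = (\<Sum>i\<in>S. \<bar>e i\<bar> * \<bar>v i\<bar>)" by (simp add: abs_mult)
    also have "\<dots> \<le> L2_set e S * L2_set v S" by (rule L2_set_mult_ineq)
    also have "\<dots> \<le> \<epsilon> * 1" using L2e_sub[of S] L2vS eps0
      by (intro mult_mono) (auto simp: U_def)
    finally show ?thesis by simp
  qed
  have sS: "(\<Sum>i\<in>S. (v i)\<^sup>2) = 1 - r\<^sup>2" using split_v NS_VS r2 by simp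
  have c_low: "\<bar>c\<bar> \<ge> A - 3 * \<epsilon>"
  proof -
    have "A * r\<^sup>2 \<le> A * r" using r0 r1 A0 mult_left_le_one_le[of r r] by (intro mult_left_mono) (auto simp: power2_eq_square)
    have "\<bar>a * (1 - r\<^sup>2)\<bar> = A * (1 - r\<^sup>2)" using r0 r1 AA
      by (simp add: abs_mult power_le_one)
    moreover have "a * (1 - r\<^sup>2) = c - (\<Sum>i\<in>S. e i * v i)" using c_eq sS by simp
    moreover have "\<bar>c - (\<Sum>i\<in>S. e i * v i)\<bar> \<le> \<bar>c\<bar> + \<bar>\<Sum>i\<in>S. e i * v i\<bar>" by (rule abs_triangle_ineq4)
    ultimately have "\<bar>c\<bar> \<ge> A * (1 - r\<^sup>2) - \<epsilon>" using ev by linarith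
    then show ?thesis using \<open>A * r\<^sup>2 \<le> A * r\<close> Ar by (simp add: algebra_simps)
  qed
  define Z where "Z = vnorm n z"
  have ZN: "Z = L2_set z N" by (simp add: Z_def vnorm_def L2_set_def N_def)
  have ZS: "Z = L2_set y S"
  proof -
    have "(\<Sum>i\<in>N. (z i)\<^sup>2) = (\<Sum>i\<in>N. (if i \<in> S then (y i)\<^sup>2 else 0))"
      using S(4) by (intro sum.cong) (auto simp: N_def)
    also have "\<dots> = (\<Sum>i\<in>S. (y i)\<^sup>2)"
      using finN S(1) by (simp add: sum.If_cases N_def Int_absorb1 Int_absorb2)
    finally show ?thesis by (simp add: ZN L2_set_def)
  qed
  have Z_up: "Z \<le> A + \<epsilon>"
  proof -
    have yf: "y = (\<lambda>i. a * v i + e i)" by (rule ext) (simp add: y_eq)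
    have "Z = L2_set (\<lambda>i. a * v i + e i) S" using ZS by (simp add: yf)
    also have "\<dots> \<le> L2_set (\<lambda>i. a * v i) S + L2_set e S" by (rule L2_set_triangle_ineq)
    also have "\<dots> \<le> A * 1 + \<epsilon>" using L2vS L2e_sub[of S] A0
      by (intro add_mono) (auto simp: L2_set_scale AA U_def mult_left_le)
    finally show ?thesis by simp
  qed
  have cZ: "\<bar>c\<bar> \<le> Z"
  proof -
    have "\<bar>c\<bar> \<le> (\<Sum>i\<in>N. \<bar>z i * v i\<bar>)"
      unfolding c_def vinner_def N_def by (rule sum_abs)
    also have "\<dots> = (\<Sum>i\<in>N. \<bar>z i\<bar> * \<bar>v i\<bar>)" by (simp add: abs_mult)
    also have "\<dots> \<le> L2_set z N * L2_set v N" by (rule L2_set_mult_ineq)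
    finally show ?thesis by (simp add: ZN L2v)
  qed
  have Apos: "A - 2 * b > 0" using Ab by simp
  have c_pos: "\<bar>c\<bar> \<ge> A - 2 * b" using c_low eps_b by linarith
  have Zpos: "Z > 0" using c_pos cZ Apos by linarith
  have u_eq: "vinner n (\<lambda>i. z i / vnorm n z) v = c / Z"
    by (simp add: vinner_def c_def Z_def sum_divide_distrib[symmetric] algebra_simps)
  have cos: "(A - 2 * b) / (A + b) \<le> \<bar>c / Z\<bar>"
  proof -
    have "(A - 2 * b) / (A + b) \<le> \<bar>c\<bar> / Z"
      using c_pos Apos Zpos Z_up eps_b eps0 by (intro frac_le) auto
    then show ?thesis using Zpos by simp
  qed
  define D where "D = (\<Sum>i\<in>N. (z i - a * v i)\<^sup>2)"
  have D_up: "D \<le> 5 * \<epsilon>\<^sup>2"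
  proof -
    have "D = (\<Sum>i\<in>N. (if i \<in> S then (e i)\<^sup>2 else a\<^sup>2 * (v i)\<^sup>2))"
      unfolding D_def using S(4) by (intro sum.cong) (auto simp: N_def y_eq power_mult_distrib)
    also have "\<dots> = (\<Sum>i\<in>S. (e i)\<^sup>2) + a\<^sup>2 * (\<Sum>i\<in>N - S. (v i)\<^sup>2)"
      using finN S(1) by (simp add: sum.If_cases N_def Int_absorb1 Int_absorb2 Diff_eq sum_distrib_left)
    also have "\<dots> = (L2_set e S)\<^sup>2 + (A * r)\<^sup>2"
      using finS by (simp add: L2_set_def sum_nonneg NS_VS r2 AA power_mult_distrib)
    also have "\<dots> \<le> \<epsilon>\<^sup>2 + (2 * \<epsilon>)\<^sup>2"
      using L2e_sub[of S] Ar A0 r0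
      by (intro add_mono power_mono) (auto simp: U_def)
    finally show ?thesis by (simp add: power_mult_distrib)
  qed
  have D_eq: "D = Z\<^sup>2 - 2 * a * c + a\<^sup>2"
  proof -
    have "D = (\<Sum>i\<in>N. (z i)\<^sup>2) - 2 * a * (\<Sum>i\<in>N. z i * v i) + a\<^sup>2 * (\<Sum>i\<in>N. (v i)\<^sup>2)"
      unfolding D_def by (simp add: power2_diff sum.distrib sum_subtractf sum_distrib_left power_mult_distrib algebra_simps)
    moreover have "(\<Sum>i\<in>N. (z i)\<^sup>2) = Z\<^sup>2" using ZN by (simp add: L2_set_def sum_nonneg)
    ultimately show ?thesis using sv by (simp add: c_def vinner_def N_def)
  qed
  have "D - (Z\<^sup>2 - c\<^sup>2) = (c - a)\<^sup>2" using D_eq by (simp add: power2_eq_square algebra_simps)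
  then have "Z\<^sup>2 - c\<^sup>2 \<le> D" using zero_le_power2[of "c - a"] by linarith
  have sin1: "1 - (c / Z)\<^sup>2 \<le> (3 * \<epsilon> / Z)\<^sup>2"
  proof -
    have "1 - (c / Z)\<^sup>2 = (Z\<^sup>2 - c\<^sup>2) / Z\<^sup>2" using Zpos by (simp add: field_simps)
    also have "\<dots> \<le> (9 * \<epsilon>\<^sup>2) / Z\<^sup>2"
    proof -
      have "Z\<^sup>2 - c\<^sup>2 \<le> 9 * \<epsilon>\<^sup>2" using \<open>Z\<^sup>2 - c\<^sup>2 \<le> D\<close> D_up zero_le_power2[of \<epsilon>] by linarith
      then show ?thesis by (intro divide_right_mono) auto
    qed
    finally show ?thesis by (simp add: power_divide power_mult_distrib)
  qed
  have sin2: "sqrt (1 - (c / Z)\<^sup>2) \<le> 3 * \<epsilon> / Z"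
  proof -
    have "sqrt (1 - (c / Z)\<^sup>2) \<le> sqrt ((3 * \<epsilon> / Z)\<^sup>2)" using sin1 by (rule real_sqrt_le_mono)
    also have "\<dots> = 3 * \<epsilon> / Z" using eps0 Zpos by simp
    finally show ?thesis .
  qed
  have sin3: "3 * \<epsilon> / Z \<le> 5 * b / (A - 2 * b)"
    using eps_b eps0 b0 Zpos c_pos cZ Apos by (intro frac_le) auto
  show ?thesis
    unfolding Let_def u_eq
    using cos sin2 sin3 by (simp add: A_def[symmetric] b_def[symmetric])
qed


theorem proposition6:
  fixes C0 :: real
  assumes "C0 > 0"
  shows "\<exists>C>0. \<forall>(n::nat) (m::nat) (k::nat) (k'::nat) (\<theta>::real) (v::nat \<Rightarrow> real)
            (X::nat \<Rightarrow> nat \<Rightarrow> real) (w::nat \<Rightarrow> real) (z::nat \<Rightarrow> real).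
    n \<ge> 2 \<and> m \<ge> 1 \<and> \<theta> > 0 \<and> 1 \<le> k \<and> k \<le> n \<and> k \<le> k' \<and>
    vnorm n v = 1 \<and> nnz n v \<le> k \<and>
    event_E C0 n m \<theta> v X \<and>
    vnorm n w = 1 \<and> nnz n w \<le> k' \<and>
    is_hard_threshold n k' (matvec n (Gamma_hat n m X) w) z \<and>
    \<theta> * \<bar>vinner n w v\<bar> > 2 * (C * (1 + \<theta>) * sqrt (real k' * ln (real n) / real m))
    \<longrightarrow>
    (let \<alpha> = \<bar>vinner n w v\<bar>;
         b = C * (1 + \<theta>) * sqrt (real k' * ln (real n) / real m);
         u = (\<lambda>i. z i / vnorm n z)
     in \<bar>vinner n u v\<bar> \<ge> (\<theta> * \<alpha> - 2 * b) / (\<theta> * \<alpha> + b) \<and>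
        sqrt (1 - (vinner n u v)\<^sup>2) \<le> 5 * b / (\<theta> * \<alpha> - 2 * b))"
  proof -
  show ?thesis
  proof (rule exI[of _ "3 * C0"], intro conjI allI impI)
    show "3 * C0 > 0" using assms by simp
  next
    fix n m k k' \<theta> v X w z
    assume h: "2 \<le> n \<and> 1 \<le> m \<and> 0 < \<theta> \<and> 1 \<le> k \<and> k \<le> n \<and> k \<le> k' \<and>
      vnorm n v = 1 \<and> nnz n v \<le> k \<and> event_E C0 n m \<theta> v X \<and> vnorm n w = 1 \<and> nnz n w \<le> k' \<and>
      is_hard_threshold n k' (matvec n (Gamma_hat n m X) w) z \<and>
      2 * (3 * C0 * (1 + \<theta>) * sqrt (real k' * ln (real n) / real m)) < \<theta> * \<bar>vinner n w v\<bar>"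
    show "let \<alpha> = \<bar>vinner n w v\<bar>; b = 3 * C0 * (1 + \<theta>) * sqrt (real k' * ln (real n) / real m);
         u = (\<lambda>i. z i / vnorm n z)
     in (\<theta> * \<alpha> - 2 * b) / (\<theta> * \<alpha> + b) \<le> \<bar>vinner n u v\<bar> \<and>
        sqrt (1 - (vinner n u v)\<^sup>2) \<le> 5 * b / (\<theta> * \<alpha> - 2 * b)"
      using main_step[OF assms] h by blast
  qed
qed

end
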